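(* For every $n\ge 3$, the cycle $C_n$ on $n$ vertices satisfies $\phi(C_n)\le 6^{n/4}$, with equality if and only if $n=4$.
   Context: A subset $F$ of vertices of a graph $G$ is a dissociation set if $G[F]$ has maximum degree at most $1$; a maximal dissociation set is one not properly contained in another dissociation set; $\phi(G)$ is the number of maximal dissociation sets of $G$. *)

theory Defs
  imports Complex_Main
begin

text \<open>A (finite simple) graph is given by a vertex set V and an adjacency
relation E, assumed symmetric and irreflexive where relevant.\<close>

definition dissociation_set :: "'a set \<Rightarrow> ('a \<Rightarrow> 'a \<Rightarrow> bool) \<Rightarrow> 'a set \<Rightarrow> bool" where
  "dissociation_set V E F \<longleftrightarrow>
     F \<subseteq> V \<and> (\<forall>v\<in>F. card {u \<in> F. E v u} \<le> 1)"

definition maximal_dissociation_set :: "'a set \<Rightarrow> ('a \<Rightarrow> 'a \<Rightarrow> bool) \<Rightarrow> 'a set \<Rightarrow> bool" where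
  "maximal_dissociation_set V E F \<longleftrightarrow>
     dissociation_set V E F \<and> (\<forall>F'. dissociation_set V E F' \<and> F \<subseteq> F' \<longrightarrow> F' = F)"

definition phi :: "'a set \<Rightarrow> ('a \<Rightarrow> 'a \<Rightarrow> bool) \<Rightarrow> nat" where
  "phi V E = card {F. maximal_dissociation_set V E F}"

definition cycle_adj :: "nat \<Rightarrow> nat \<Rightarrow> nat \<Rightarrow> bool" where
  "cycle_adj n i j \<longleftrightarrow> i < n \<and> j < n \<and> (j = (i + 1) mod n \<or> i = (j + 1) mod n)"

end

theory Submission
  imports Defs
begin

fun lok :: "bool list \<Rightarrow> bool" where
 "lok (a#b#c#d#r) = (\<not>(a\<and>b\<and>c) \<and> (a\<or>b\<or>c) \<and> \<not>(\<not>a\<and>b\<and>\<not>c\<and>\<not>d) \<and> \<not>(\<not>a\<and>\<not>b\<and>c\<and>\<not>d) \<and> lok (b#c#d#r))"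
| "lok [a,b,c] = (\<not>(a\<and>b\<and>c) \<and> (a\<or>b\<or>c))"
| "lok _ = True"

fun gen :: "nat \<Rightarrow> bool list list" where
 "gen 0 = [[]]"
| "gen (Suc k) = filter lok (concat (map (\<lambda>xs. [False#xs, True#xs]) (gen k)))"

definition sc :: "nat \<Rightarrow> nat \<Rightarrow> nat" where "sc n v = (if v+1 = n then 0 else v+1)"
definition pc :: "nat \<Rightarrow> nat \<Rightarrow> nat" where "pc n v = (if v = 0 then n-1 else v-1)"
definition Dn :: "nat \<Rightarrow> nat set \<Rightarrow> bool" where "Dn n F = (\<forall>v\<in>F. \<not>(sc n v \<in> F \<and> pc n v \<in> F))"
definition Mx :: "nat \<Rightarrow> nat set \<Rightarrow> bool" where
 "Mx n F = (Dn n F \<and> (\<forall>v\<in>set [0..<n]. v \<notin> F \<longrightarrow> \<not> Dn n (insert v F)))"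

definition LL :: "nat \<Rightarrow> bool list set" where "LL k = {bs. length bs = k \<and> lok bs}"

lemma lok_tl: "lok (x#xs) \<Longrightarrow> lok xs"
  apply (cases xs rule: lok.cases) apply auto done

lemma lok_drop: "lok (xs@ys) \<Longrightarrow> lok ys"
  by (induction xs) (auto dest: lok_tl)

lemma lok_take: "lok (xs@ys) \<Longrightarrow> lok xs"
proof (induction xs)
  case Nil then show ?case by simp
next
  case (Cons x xs)
  then have l: "lok xs" using lok_tl by auto
  show ?case
  proof (cases xs)
    case Nil then show ?thesis by simp
  next
    case (Cons a t) note xa = this
    show ?thesis
    proof (cases t)
      case Nil then show ?thesis using xa by simp
    next
      case (Cons b u) note tb = this
      show ?thesis
      proof (cases u)
        case Nil
        then show ?thesis using xa tb Cons.prems by (cases ys) auto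
      next
        case (Cons c r)
        then show ?thesis using xa tb Cons.prems l by simp
      qed
    qed
  qed
qed

lemma LL_gen: "LL k \<subseteq> set (gen k)"
proof (induction k)
  case 0 then show ?case by (auto simp: LL_def)
next
  case (Suc k)
  show ?case
  proof
    fix bs assume "bs \<in> LL (Suc k)"
    then obtain b xs where bs: "bs = b#xs" "length xs = k" "lok (b#xs)"
      by (cases bs) (auto simp: LL_def)
    then have "xs \<in> LL k" using lok_tl by (auto simp: LL_def)
    then have "xs \<in> set (gen k)" using Suc by auto
    then show "bs \<in> set (gen (Suc k))" using bs by (cases b) auto
  qed
qed

lemma LL_finite: "finite (LL k)"
  using LL_gen finite_subset by blast

lemma LL_le_gen: "card (LL k) \<le> length (gen k)"
  by (meson LL_gen List.finite_set card_length card_mono le_trans)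

lemma LL_mult: "card (LL (a+b)) \<le> card (LL a) * card (LL b)"
proof -
  have "inj_on (\<lambda>bs. (take a bs, drop a bs)) (LL (a+b))"
    by (rule inj_onI) (metis append_take_drop_id prod.inject)
  moreover have "(\<lambda>bs. (take a bs, drop a bs)) ` LL (a+b) \<subseteq> LL a \<times> LL b"
  proof
    fix p assume "p \<in> (\<lambda>bs. (take a bs, drop a bs)) ` LL (a+b)"
    then obtain bs where "bs \<in> LL (a+b)" "p = (take a bs, drop a bs)" by auto
    moreover have "bs = take a bs @ drop a bs" by simp
    ultimately show "p \<in> LL a \<times> LL b"
      unfolding LL_def using lok_take[of "take a bs" "drop a bs"] lok_drop[of "take a bs" "drop a bs"] by auto
  qed
  ultimately have "card (LL (a+b)) \<le> card (LL a \<times> LL b)"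
    using card_inj_on_le LL_finite by (metis finite_cartesian_product)
  then show ?thesis by (simp add: card_cartesian_product)
qed


lemma sc_lt: "3 \<le> n \<Longrightarrow> v < n \<Longrightarrow> sc n v < n" by (auto simp: sc_def)
lemma pc_lt: "3 \<le> n \<Longrightarrow> v < n \<Longrightarrow> pc n v < n" by (auto simp: pc_def)
lemma sc_ne_pc: "3 \<le> n \<Longrightarrow> v < n \<Longrightarrow> sc n v \<noteq> pc n v" by (auto simp: sc_def pc_def)
lemma pc_pc_ne: "3 \<le> n \<Longrightarrow> v < n \<Longrightarrow> pc n (pc n v) \<noteq> v" by (auto simp: pc_def)
lemma sc_sc_ne: "3 \<le> n \<Longrightarrow> v < n \<Longrightarrow> sc n (sc n v) \<noteq> v" by (auto simp: sc_def)
lemma sc_eq: "3 \<le> n \<Longrightarrow> v < n \<Longrightarrow> w < n \<Longrightarrow> sc n w = v \<longleftrightarrow> w = pc n v"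
  by (auto simp: sc_def pc_def)
lemma pc_eq: "3 \<le> n \<Longrightarrow> v < n \<Longrightarrow> w < n \<Longrightarrow> pc n w = v \<longleftrightarrow> w = sc n v"
  by (auto simp: sc_def pc_def)

lemma mod_sc: "v < n \<Longrightarrow> (v + 1) mod n = sc n v"
  by (auto simp: sc_def)

lemma adj_iff: "3 \<le> n \<Longrightarrow> v < n \<Longrightarrow> cycle_adj n v u \<longleftrightarrow> (u = sc n v \<or> u = pc n v)"
  unfolding cycle_adj_def
  using sc_lt pc_lt mod_sc sc_eq by metis

lemma card_two: "a \<noteq> b \<Longrightarrow> finite F \<Longrightarrow> card {u\<in>F. u = a \<or> u = b} \<le> 1 \<longleftrightarrow> \<not>(a \<in> F \<and> b \<in> F)"
proof -
  assume ab: "a \<noteq> b" and f: "finite F"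
  have "{u\<in>F. u = a \<or> u = b} = (if a \<in> F then {a} else {}) \<union> (if b \<in> F then {b} else {})" by auto
  then show ?thesis using ab by auto
qed

lemma dissoc_iff: assumes n: "3 \<le> n"
  shows "dissociation_set {0..<n} (cycle_adj n) F \<longleftrightarrow> F \<subseteq> {0..<n} \<and> Dn n F"
proof -
  have "card {u\<in>F. cycle_adj n v u} \<le> 1 \<longleftrightarrow> \<not>(sc n v \<in> F \<and> pc n v \<in> F)"
    if "F \<subseteq> {0..<n}" "v \<in> F" for v
  proof -
    have v: "v < n" using that by auto
    have "{u\<in>F. cycle_adj n v u} = {u\<in>F. u = sc n v \<or> u = pc n v}"
      using adj_iff[OF n v] by auto
    moreover have "finite F" using that finite_subset by blast
    ultimately show ?thesis using card_two sc_ne_pc[OF n v] by simp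
  qed
  then show ?thesis unfolding dissociation_set_def Dn_def by blast
qed

lemma Dn_mono: "Dn n F \<Longrightarrow> G \<subseteq> F \<Longrightarrow> Dn n G" unfolding Dn_def by blast

lemma maximal_iff: assumes n: "3 \<le> n"
  shows "maximal_dissociation_set {0..<n} (cycle_adj n) F \<longleftrightarrow> F \<subseteq> {0..<n} \<and> Mx n F"
proof
  assume m: "maximal_dissociation_set {0..<n} (cycle_adj n) F"
  then have d: "F \<subseteq> {0..<n}" "Dn n F"
    unfolding maximal_dissociation_set_def dissoc_iff[OF n] by auto
  have "\<not> Dn n (insert v F)" if "v < n" "v \<notin> F" for v
  proof
    assume "Dn n (insert v F)"
    then have "dissociation_set {0..<n} (cycle_adj n) (insert v F)"
      using d that dissoc_iff[OF n] by auto
    then have "insert v F = F" using m unfolding maximal_dissociation_set_def by blast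
    then show False using that by auto
  qed
  then show "F \<subseteq> {0..<n} \<and> Mx n F" using d unfolding Mx_def by auto
next
  assume a: "F \<subseteq> {0..<n} \<and> Mx n F"
  have "F' = F" if h: "dissociation_set {0..<n} (cycle_adj n) F'" "F \<subseteq> F'" for F'
  proof (rule ccontr)
    assume "F' \<noteq> F"
    then obtain v where v: "v \<in> F'" "v \<notin> F" using h by blast
    have "F' \<subseteq> {0..<n}" "Dn n F'" using h dissoc_iff[OF n] by auto
    then have "v < n" "Dn n (insert v F)" using v h Dn_mono[of n F' "insert v F"] by auto
    then show False using a v unfolding Mx_def by auto
  qed
  then show "maximal_dissociation_set {0..<n} (cycle_adj n) F"
    using a unfolding maximal_dissociation_set_def dissoc_iff[OF n] Mx_def by auto
qed

lemma phi_eq: assumes "3 \<le> n" shows "phi {0..<n} (cycle_adj n) = card {F. F \<subseteq> {0..<n} \<and> Mx n F}"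
  unfolding phi_def maximal_iff[OF assms] by simp

lemma small_eq: "{F. F \<subseteq> {0..<n} \<and> Mx n F} = set (filter (Mx n) (map set (subseqs [0..<n])))"
proof -
  have "set (map set (subseqs [0..<n])) = Pow {0..<n}" using subseqs_powset[of "[0..<n]"] by simp
  then show ?thesis by auto
qed

lemma phi3: "phi {0..<3} (cycle_adj 3) = 3"
  unfolding phi_eq[OF order_refl] small_eq by code_simp
lemma phi4: "phi {0..<4} (cycle_adj 4) = 6"
  by (subst phi_eq) (auto simp: small_eq, code_simp)
lemma phi5: "phi {0..<5} (cycle_adj 5) = 5"
  by (subst phi_eq) (auto simp: small_eq, code_simp)
lemma phi6: "phi {0..<6} (cycle_adj 6) = 5"
  by (subst phi_eq) (auto simp: small_eq, code_simp)


lemma lok_intro: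
  "(\<And>i. i+2 < length bs \<Longrightarrow> \<not>(bs!i \<and> bs!(i+1) \<and> bs!(i+2)) \<and> (bs!i \<or> bs!(i+1) \<or> bs!(i+2))) \<Longrightarrow>
   (\<And>i. i+3 < length bs \<Longrightarrow> \<not>(\<not>bs!i \<and> bs!(i+1) \<and> \<not>bs!(i+2) \<and> \<not>bs!(i+3)) \<and> \<not>(\<not>bs!i \<and> \<not>bs!(i+1) \<and> bs!(i+2) \<and> \<not>bs!(i+3))) \<Longrightarrow>
   lok bs"
proof (induction bs rule: lok.induct)
  case (1 a b c d r)
  have t: "lok (b#c#d#r)"
  proof (rule "1.IH")
    fix i assume "i + 2 < length (b#c#d#r)"
    then have "Suc i + 2 < length (a#b#c#d#r)" by simp
    from "1.prems"(1)[OF this] show "\<not> ((b#c#d#r) ! i \<and> (b#c#d#r) ! (i + 1) \<and> (b#c#d#r) ! (i + 2)) \<and>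
       ((b#c#d#r) ! i \<or> (b#c#d#r) ! (i + 1) \<or> (b#c#d#r) ! (i + 2))" by simp
  next
    fix i assume "i + 3 < length (b#c#d#r)"
    then have "Suc i + 3 < length (a#b#c#d#r)" by simp
    from "1.prems"(2)[OF this] show "\<not> (\<not> (b#c#d#r) ! i \<and> (b#c#d#r) ! (i + 1) \<and> \<not> (b#c#d#r) ! (i + 2) \<and> \<not> (b#c#d#r) ! (i + 3)) \<and>
       \<not> (\<not> (b#c#d#r) ! i \<and> \<not> (b#c#d#r) ! (i + 1) \<and> (b#c#d#r) ! (i + 2) \<and> \<not> (b#c#d#r) ! (i + 3))" by simp
  qed
  have h3: "\<not>(a \<and> b \<and> c) \<and> (a \<or> b \<or> c)" using "1.prems"(1)[of 0] by simp
  have h4: "\<not>(\<not>a\<and>b\<and>\<not>c\<and>\<not>d) \<and> \<not>(\<not>a\<and>\<not>b\<and>c\<and>\<not>d)" using "1.prems"(2)[of 0] by simp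
  show ?case using t h3 h4 by simp
next
  case (2 a b c)
  then show ?case using "2"(1)[of 0] by simp
qed auto

lemma Dn_insert:
  assumes n: "3 \<le> n" and F: "F \<subseteq> {0..<n}" and D: "Dn n F" and v: "v < n"
    and c1: "\<not>(sc n v \<in> F \<and> pc n v \<in> F)"
    and c2: "sc n v \<in> F \<Longrightarrow> sc n (sc n v) \<notin> F"
    and c3: "pc n v \<in> F \<Longrightarrow> pc n (pc n v) \<notin> F"
  shows "Dn n (insert v F)"
  unfolding Dn_def
proof
  fix w assume w: "w \<in> insert v F"
  show "\<not> (sc n w \<in> insert v F \<and> pc n w \<in> insert v F)"
  proof (cases "w = v")
    have "sc n v \<noteq> v" "pc n v \<noteq> v" using n v by (auto simp: sc_def pc_def)
    moreover case True
    ultimately show ?thesis using c1 by auto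
  next
    case False
    then have wF: "w \<in> F" "w < n" using w F by auto
    show ?thesis
    proof (cases "sc n w = v")
      case True
      then have "w = pc n v" using sc_eq[OF n v wF(2)] by simp
      then show ?thesis using c3 wF pc_pc_ne[OF n v] by auto
    next
      case s: False
      show ?thesis
      proof (cases "pc n w = v")
        case True
        then have "w = sc n v" using pc_eq[OF n v wF(2)] by simp
        then show ?thesis using c2 wF sc_sc_ne[OF n v] by auto
      next
        case False
        then show ?thesis using s D wF unfolding Dn_def by auto
      qed
    qed
  qed
qed

definition bits :: "nat \<Rightarrow> nat set \<Rightarrow> bool list" where "bits n F = map (\<lambda>i. i \<in> F) [0..<n]"

lemma bits_lok:
  assumes n: "3 \<le> n" and F: "F \<subseteq> {0..<n}" and M: "Mx n F"
  shows "lok (bits n F)"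
proof (rule lok_intro)
  have D: "Dn n F" and mx: "\<And>v. v < n \<Longrightarrow> v \<notin> F \<Longrightarrow> \<not> Dn n (insert v F)" using M unfolding Mx_def by auto
  fix i assume "i + 2 < length (bits n F)"
  then have i: "i + 2 < n" by (simp add: bits_def)
  have e: "sc n i = i+1" "sc n (i+1) = i+2" "pc n (i+1) = i" "pc n (i+2) = i+1"
    using i by (auto simp: sc_def pc_def)
  have a: "\<not>(i \<in> F \<and> i+1 \<in> F \<and> i+2 \<in> F)" using D e unfolding Dn_def by auto
  have b: "i \<in> F \<or> i+1 \<in> F \<or> i+2 \<in> F"
  proof (rule ccontr)
    assume nb: "\<not> (i \<in> F \<or> i+1 \<in> F \<or> i+2 \<in> F)"
    then have "Dn n (insert (i+1) F)" using Dn_insert[OF n F D, of "i+1"] e i by auto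
    then show False using mx[of "i+1"] i nb by auto
  qed
  show "\<not> (bits n F ! i \<and> bits n F ! (i + 1) \<and> bits n F ! (i + 2)) \<and>
        (bits n F ! i \<or> bits n F ! (i + 1) \<or> bits n F ! (i + 2))"
    using a b i by (simp add: bits_def nth_append)
next
  have D: "Dn n F" and mx: "\<And>v. v < n \<Longrightarrow> v \<notin> F \<Longrightarrow> \<not> Dn n (insert v F)" using M unfolding Mx_def by auto
  fix i assume "i + 3 < length (bits n F)"
  then have i: "i + 3 < n" by (simp add: bits_def)
  have e: "sc n i = i+1" "sc n (i+1) = i+2" "pc n (i+1) = i" "pc n (i+2) = i+1"
    "sc n (i+2) = i+3" "pc n (i+3) = i+2"
    using i by (auto simp: sc_def pc_def)
  have a: "\<not>(i \<notin> F \<and> i+1 \<in> F \<and> i+2 \<notin> F \<and> i+3 \<notin> F)"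
  proof
    assume h: "i \<notin> F \<and> i+1 \<in> F \<and> i+2 \<notin> F \<and> i+3 \<notin> F"
    then have "Dn n (insert (i+2) F)" using Dn_insert[OF n F D, of "i+2"] e i by auto
    then show False using mx[of "i+2"] i h by auto
  qed
  have b: "\<not>(i \<notin> F \<and> i+1 \<notin> F \<and> i+2 \<in> F \<and> i+3 \<notin> F)"
  proof
    assume h: "i \<notin> F \<and> i+1 \<notin> F \<and> i+2 \<in> F \<and> i+3 \<notin> F"
    then have "Dn n (insert (i+1) F)" using Dn_insert[OF n F D, of "i+1"] e i by auto
    then show False using mx[of "i+1"] i h by auto
  qed
  show "\<not> (\<not> bits n F ! i \<and> bits n F ! (i + 1) \<and> \<not> bits n F ! (i + 2) \<and> \<not> bits n F ! (i + 3)) \<and>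
        \<not> (\<not> bits n F ! i \<and> \<not> bits n F ! (i + 1) \<and> bits n F ! (i + 2) \<and> \<not> bits n F ! (i + 3))"
    using a b i by (simp add: bits_def nth_append)
qed

lemma phi_le_LL: assumes n: "3 \<le> n" shows "phi {0..<n} (cycle_adj n) \<le> card (LL n)"
proof -
  let ?A = "{F. F \<subseteq> {0..<n} \<and> Mx n F}"
  have inj: "inj_on (bits n) ?A"
  proof (rule inj_onI)
    fix F G assume "F \<in> ?A" "G \<in> ?A" "bits n F = bits n G"
    then have "\<forall>i<n. (i \<in> F) = (i \<in> G)"
      unfolding bits_def by (metis (no_types, lifting) add_0 diff_zero length_map length_upt nth_map nth_upt)
    then show "F = G" using \<open>F \<in> ?A\<close> \<open>G \<in> ?A\<close> by auto
  qed
  have "bits n ` ?A \<subseteq> LL n" using bits_lok[OF n] by (auto simp: LL_def bits_def)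
  then have "card ?A \<le> card (LL n)" using card_inj_on_le[OF inj] LL_finite by blast
  then show ?thesis using phi_eq[OF n] by simp
qed

lemma pow_bound: assumes "(c::real) \<ge> 0" "c^4 < 6^n" shows "c < 6 powr (real n / 4)"
proof (rule ccontr)
  assume "\<not> ?thesis"
  then have "(6 powr (real n / 4))^4 \<le> c^4" by (simp add: power_mono)
  moreover have "(6 powr (real n / 4))^4 = 6^n"
    by (simp add: powr_realpow[symmetric] powr_powr)
  ultimately show False using assms by simp
qed

lemma cnt: "length (gen k) \<le> m \<Longrightarrow> m^4 < 6^k \<Longrightarrow> real (card (LL k)) < 6 powr (real k / 4)"
proof -
  assume a: "length (gen k) \<le> m" "m^4 < 6^k"
  have "card (LL k) \<le> m" using LL_le_gen[of k] a by simp
  then have "real (card (LL k)) ^ 4 \<le> real m ^ 4" by (simp add: power_mono)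
  also have "\<dots> < 6^k" using a(2) by (metis of_nat_less_iff of_nat_numeral of_nat_power)
  finally show ?thesis by (intro pow_bound) auto
qed

lemma LL_bound: "7 \<le> n \<Longrightarrow> real (card (LL n)) < 6 powr (real n / 4)"
proof (induction n rule: less_induct)
  case (less n)
  show ?case
  proof (cases "n \<le> 13")
    case True
    have "n = 7 \<or> n = 8 \<or> n = 9 \<or> n = 10 \<or> n = 11 \<or> n = 12 \<or> n = 13" using True less.prems by auto
    then show ?thesis
    proof (elim disjE)
      assume nn: "n = 7" show ?thesis unfolding nn by (rule cnt[of _ 22]) (code_simp, simp)
    next
      assume nn: "n = 8" show ?thesis unfolding nn by (rule cnt[of _ 30]) (code_simp, simp)
    next
      assume nn: "n = 9" show ?thesis unfolding nn by (rule cnt[of _ 42]) (code_simp, simp)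
    next
      assume nn: "n = 10" show ?thesis unfolding nn by (rule cnt[of _ 59]) (code_simp, simp)
    next
      assume nn: "n = 11" show ?thesis unfolding nn by (rule cnt[of _ 83]) (code_simp, simp)
    next
      assume nn: "n = 12" show ?thesis unfolding nn by (rule cnt[of _ 116]) (code_simp, simp)
    next
      assume nn: "n = 13" show ?thesis unfolding nn by (rule cnt[of _ 162]) (code_simp, simp)
    qed
  next
    case False
    have a: "real (card (LL (n-7))) < 6 powr (real (n-7) / 4)" using less.IH[of "n-7"] False by simp
    have b: "real (card (LL 7)) < 6 powr (real 7 / 4)"
      by (rule cnt[of _ 22]) (code_simp, simp)
    have "card (LL n) \<le> card (LL 7) * card (LL (n-7))" using LL_mult[of 7 "n-7"] False by simp
    then have "real (card (LL n)) \<le> real (card (LL 7)) * real (card (LL (n-7)))"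
      by (metis of_nat_le_iff of_nat_mult)
    also have "\<dots> < 6 powr (real 7 / 4) * 6 powr (real (n-7) / 4)"
      using a b by (intro mult_strict_mono) auto
    also have "\<dots> = 6 powr (real n / 4)" using False
      by (simp add: powr_add[symmetric] of_nat_diff add_divide_distrib[symmetric])
    finally show ?thesis .
  qed
qed

lemma small_case:
  assumes p: "phi {0..<k} (cycle_adj k) = m" and lt: "m^4 < 6^k"
  shows "real (phi {0..<k} (cycle_adj k)) \<le> 6 powr (real k / 4)
         \<and> real (phi {0..<k} (cycle_adj k)) \<noteq> 6 powr (real k / 4)"
proof -
  have "real m ^ 4 < 6 ^ k" using lt by (metis of_nat_less_iff of_nat_numeral of_nat_power)
  then have "real m < 6 powr (real k / 4)" by (intro pow_bound) auto
  then show ?thesis using p by simp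
qed

theorem lemma2p6:
  fixes n :: nat
  assumes "n \<ge> 3"
  shows "real (phi {0..<n} (cycle_adj n)) \<le> 6 powr (real n / 4)
         \<and> (real (phi {0..<n} (cycle_adj n)) = 6 powr (real n / 4) \<longleftrightarrow> n = 4)"
proof (cases "n \<le> 6")
  case True
  then have "n = 3 \<or> n = 4 \<or> n = 5 \<or> n = 6" using assms by auto
  then show ?thesis
  proof (elim disjE)
    assume nn: "n = 3"
    have "(3::nat)^4 < 6^3" by simp
    from small_case[OF phi3 this] show ?thesis unfolding nn by simp
  next
    assume nn: "n = 4"
    have "6 powr (real 4 / 4) = (6::real)" by simp
    then show ?thesis unfolding nn phi4 by simp
  next
    assume nn: "n = 5"
    have "(5::nat)^4 < 6^5" by simp
    from small_case[OF phi5 this] show ?thesis unfolding nn by simp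
  next
    assume nn: "n = 6"
    have "(5::nat)^4 < 6^6" by simp
    from small_case[OF phi6 this] show ?thesis unfolding nn by simp
  qed
next
  case False
  have "phi {0..<n} (cycle_adj n) \<le> card (LL n)" using phi_le_LL[OF assms] .
  then have "real (phi {0..<n} (cycle_adj n)) \<le> real (card (LL n))" by simp
  also have "\<dots> < 6 powr (real n / 4)" using LL_bound[of n] False by simp
  finally have "real (phi {0..<n} (cycle_adj n)) < 6 powr (real n / 4)" .
  moreover have "n \<noteq> 4" using False by simp
  ultimately show ?thesis by simp
qed

end
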